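(* Fix $\beta>0$ and a transient MDP with a sink state as in the context. For each stationary policy $\pi=(\bm d)_\infty\in\Pi_{\mathrm{SR}}$ and each $\bm z\in\mathbb R^S$ with $\bm z\ge\bm 0$: \[ \bm w^\infty(\pi,\bm z)>-\bm\infty\quad\Longrightarrow\quad\rho(\bm B^{\bm d})<1, \] where $\rho$ denotes the spectral radius.
   Context: MDP: states $\bar{\mathcal S}=\{1,\dots,S,S+1\}$, $e:=S+1$ a sink state, $\mathcal S=\{1,\dots,S\}$; finite actions $\mathcal A$; transitions $p(s,a,s')$, real rewards $r(s,a,s')$ of arbitrary sign; $p(e,a,e)=1$, $r(e,a,e)=0$. Transience (standing assumption): for every stationary deterministic policy $\pi$, $\sum_{t\ge0}\mathbb P^{\pi,s}[\tilde s_t=s']<\infty$ for all $s,s'\in\mathcal S$. A decision rule $\bm d$ assigns to each $s\in\mathcal S$ a distribution $(d_a(s))_a$ over actions; $\Pi_{\mathrm{SR}}$ is the set of stationary randomized policies $(\bm d)_\infty$. Define $B^{\bm d}_{s,s'}=\sum_a p(s,a,s')d_a(s)e^{-\beta r(s,a,s')}$ and $b^{\bm d}_s=\sum_a p(s,a,e)d_a(s)e^{-\beta r(s,a,e)}$ for $s,s'\in\mathcal S$. For $t\in\mathbb N$ and $\bm z\in\mathbb R^S$: $\bm w^t(\pi,\bm z)=-(\bm B^{\bm d})^t\bm z-\sum_{k=0}^{t-1}(\bm B^{\bm d})^k\bm b^{\bm d}$, and $\bm w^\infty(\pi,\bm z)=\liminf_{t\to\infty}\bm w^t(\pi,\bm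 z)$ componentwise; $>-\bm\infty$ means every component is finite. *)

theory Defs
  imports "Jordan_Normal_Form.Spectral_Radius" "HOL-Library.Extended_Real"
begin

text \<open>States are 0..S-1 (the paper's 1..S) and S (the sink e = S+1).
  Actions form a finite nonempty set A. p s a s' are transition probabilities,
  r s a s' real rewards.\<close>

definition mdp :: "nat \<Rightarrow> 'a set \<Rightarrow> (nat \<Rightarrow> 'a \<Rightarrow> nat \<Rightarrow> real)
    \<Rightarrow> (nat \<Rightarrow> 'a \<Rightarrow> nat \<Rightarrow> real) \<Rightarrow> bool" where
  "mdp S A p r \<longleftrightarrow> finite A \<and> A \<noteq> {} \<and>
     (\<forall>s\<le>S. \<forall>a\<in>A. (\<forall>s'\<le>S. 0 \<le> p s a s') \<and> (\<Sum>s'\<le>S. p s a s') = 1) \<and>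
     (\<forall>a\<in>A. p S a S = 1 \<and> r S a S = 0)"

definition P_det :: "nat \<Rightarrow> (nat \<Rightarrow> 'a \<Rightarrow> nat \<Rightarrow> real) \<Rightarrow> (nat \<Rightarrow> 'a) \<Rightarrow> real mat" where
  "P_det S p \<sigma> = mat (S+1) (S+1) (\<lambda>(s,s'). p s (\<sigma> s) s')"

text \<open>Transience: for every stationary deterministic policy, the expected number of
  visits P^{pi,s}[s_t = s'] = (P^t)_{s s'} summed over t is finite.\<close>
definition transient :: "nat \<Rightarrow> 'a set \<Rightarrow> (nat \<Rightarrow> 'a \<Rightarrow> nat \<Rightarrow> real) \<Rightarrow> bool" where
  "transient S A p \<longleftrightarrow> (\<forall>\<sigma>. (\<forall>s\<le>S. \<sigma> s \<in> A) \<longrightarrow>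
     (\<forall>s<S. \<forall>s'<S. summable (\<lambda>t. (P_det S p \<sigma> ^\<^sub>m t) $$ (s,s'))))"

definition decision_rule :: "nat \<Rightarrow> 'a set \<Rightarrow> (nat \<Rightarrow> 'a \<Rightarrow> real) \<Rightarrow> bool" where
  "decision_rule S A d \<longleftrightarrow> (\<forall>s<S. (\<forall>a\<in>A. 0 \<le> d s a) \<and> (\<Sum>a\<in>A. d s a) = 1)"

definition Bmat :: "nat \<Rightarrow> 'a set \<Rightarrow> (nat \<Rightarrow> 'a \<Rightarrow> nat \<Rightarrow> real) \<Rightarrow> (nat \<Rightarrow> 'a \<Rightarrow> nat \<Rightarrow> real)
    \<Rightarrow> real \<Rightarrow> (nat \<Rightarrow> 'a \<Rightarrow> real) \<Rightarrow> real mat" where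
  "Bmat S A p r \<beta> d = mat S S (\<lambda>(s,s'). \<Sum>a\<in>A. p s a s' * d s a * exp (- \<beta> * r s a s'))"

definition bvec :: "nat \<Rightarrow> 'a set \<Rightarrow> (nat \<Rightarrow> 'a \<Rightarrow> nat \<Rightarrow> real) \<Rightarrow> (nat \<Rightarrow> 'a \<Rightarrow> nat \<Rightarrow> real)
    \<Rightarrow> real \<Rightarrow> (nat \<Rightarrow> 'a \<Rightarrow> real) \<Rightarrow> real vec" where
  "bvec S A p r \<beta> d = vec S (\<lambda>s. \<Sum>a\<in>A. p s a S * d s a * exp (- \<beta> * r s a S))"

definition wt :: "nat \<Rightarrow> 'a set \<Rightarrow> (nat \<Rightarrow> 'a \<Rightarrow> nat \<Rightarrow> real) \<Rightarrow> (nat \<Rightarrow> 'a \<Rightarrow> nat \<Rightarrow> real)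
    \<Rightarrow> real \<Rightarrow> (nat \<Rightarrow> 'a \<Rightarrow> real) \<Rightarrow> real vec \<Rightarrow> nat \<Rightarrow> real vec" where
  "wt S A p r \<beta> d z t =
     vec S (\<lambda>i. - ((Bmat S A p r \<beta> d ^\<^sub>m t) *\<^sub>v z) $ i
                 - (\<Sum>k<t. ((Bmat S A p r \<beta> d ^\<^sub>m k) *\<^sub>v bvec S A p r \<beta> d) $ i))"

definition winf :: "nat \<Rightarrow> 'a set \<Rightarrow> (nat \<Rightarrow> 'a \<Rightarrow> nat \<Rightarrow> real) \<Rightarrow> (nat \<Rightarrow> 'a \<Rightarrow> nat \<Rightarrow> real)
    \<Rightarrow> real \<Rightarrow> (nat \<Rightarrow> 'a \<Rightarrow> real) \<Rightarrow> real vec \<Rightarrow> nat \<Rightarrow> ereal" where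
  "winf S A p r \<beta> d z i = liminf (\<lambda>t. ereal (wt S A p r \<beta> d z t $ i))"

end

theory Submission imports Defs begin

lemma mv_entry: "A \<in> carrier_mat n n \<Longrightarrow> v \<in> carrier_vec n \<Longrightarrow> i < n \<Longrightarrow>
  (A *\<^sub>v v) $ i = (\<Sum>j=0..<n. A $$ (i,j) * v $ j)"
  by (auto simp: scalar_prod_def intro!: sum.cong)

lemma mm_entry: "A \<in> carrier_mat n n \<Longrightarrow> B \<in> carrier_mat n n \<Longrightarrow> i < n \<Longrightarrow> j < n \<Longrightarrow>
  (A * B) $$ (i,j) = (\<Sum>k=0..<n. A $$ (i,k) * B $$ (k,j))"
  by (auto simp: scalar_prod_def intro!: sum.cong)

lemma pow_Suc': assumes "A \<in> carrier_mat n n" shows "A ^\<^sub>m Suc k = A * A ^\<^sub>m k"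
proof (induction k)
  case 0 then show ?case using assms by simp
next
  case (Suc k)
  have "A ^\<^sub>m Suc (Suc k) = (A * A ^\<^sub>m k) * A" using Suc by simp
  also have "\<dots> = A * (A ^\<^sub>m k * A)" using assms by (simp add: assoc_mult_mat[of _ n n _ n _ n])
  finally show ?case by simp
qed

lemma exists_pos:
  assumes "finite A" "\<forall>a\<in>A. 0 \<le> (f a::real)" "(\<Sum>a\<in>A. f a) = 1"
  shows "\<exists>a. a \<in> A \<and> 0 < f a"
proof (rule ccontr)
  assume "\<not> ?thesis"
  then have "\<forall>a\<in>A. f a \<le> 0" by force
  then have "(\<Sum>a\<in>A. f a) \<le> 0" by (simp add: sum_nonpos)
  with assms show False by simp
qed

lemma closed_contra:
  assumes mdp: "mdp S A p r" and tr: "transient S A p" and dr: "decision_rule S A d"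
    and C: "C \<subseteq> {..<S}" "C \<noteq> {}"
    and cl: "\<forall>s\<in>C. \<forall>a\<in>A. 0 < d s a \<longrightarrow> (\<forall>j\<le>S. j \<notin> C \<longrightarrow> p s a j = 0)"
  shows False
proof -
  have finA: "finite A" and Ane: "A \<noteq> {}" using mdp by (auto simp: mdp_def)
  define \<sigma> where "\<sigma> s = (if s \<in> C then SOME a. a \<in> A \<and> 0 < d s a else SOME a. a \<in> A)" for s
  have sC: "\<sigma> s \<in> A \<and> 0 < d s (\<sigma> s)" if "s \<in> C" for s
  proof -
    have "s < S" using that C by auto
    then have "\<exists>a. a \<in> A \<and> 0 < d s a" using dr finA exists_pos[of A "d s"] by (auto simp: decision_rule_def)
    then show ?thesis using that unfolding \<sigma>_def by (simp add: someI_ex[of "\<lambda>a. a \<in> A \<and> 0 < d s a"])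
  qed
  have sA: "\<sigma> s \<in> A" for s
    using sC[of s] Ane by (cases "s \<in> C") (auto simp: \<sigma>_def some_in_eq)
  define P where "P = P_det S p \<sigma>"
  have Pc: "P \<in> carrier_mat (S+1) (S+1)" by (simp add: P_def P_det_def)
  have Pe: "P $$ (i,j) = p i (\<sigma> i) j" if "i \<le> S" "j \<le> S" for i j
    using that by (simp add: P_def P_det_def)
  have fin: "finite C" using C finite_subset by blast
  have row1: "(\<Sum>j\<in>C. P $$ (s,j)) = 1" if "s \<in> C" for s
  proof -
    have sS: "s \<le> S" using that C by auto
    have "1 = (\<Sum>j\<le>S. p s (\<sigma> s) j)" using mdp sS sA by (auto simp: mdp_def)
    also have "\<dots> = (\<Sum>j\<in>C. p s (\<sigma> s) j) + (\<Sum>j\<in>{..S}-C. p s (\<sigma> s) j)"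
      using C by (subst sum.subset_diff[of C]) auto
    also have "(\<Sum>j\<in>{..S}-C. p s (\<sigma> s) j) = 0"
      using cl sC[OF that] that by (intro sum.neutral) auto
    finally have "(\<Sum>j\<in>C. p s (\<sigma> s) j) = 1" by simp
    moreover have "(\<Sum>j\<in>C. P $$ (s,j)) = (\<Sum>j\<in>C. p s (\<sigma> s) j)"
      using Pe sS C by (intro sum.cong) auto
    ultimately show ?thesis by simp
  qed
  have pow1: "(\<Sum>j\<in>C. (P ^\<^sub>m t) $$ (s,j)) = 1" if "s \<in> C" for s t
    using that
  proof (induction t arbitrary: s)
    case 0
    have "(\<Sum>j\<in>C. (P ^\<^sub>m 0) $$ (s,j)) = (\<Sum>j\<in>C. if s = j then 1 else 0)"
    proof (intro sum.cong refl)
      fix j assume "j \<in> C"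
      then have "j < S + 1" "s < S + 1" using C 0 by auto
      then show "(P ^\<^sub>m 0) $$ (s,j) = (if s = j then 1 else 0)" using Pc by simp
    qed
    then show ?case using 0 fin by simp
  next
    case (Suc t)
    have sS: "s < S + 1" using Suc C by auto
    have "(\<Sum>j\<in>C. (P ^\<^sub>m Suc t) $$ (s,j)) = (\<Sum>j\<in>C. \<Sum>k=0..<S+1. P $$ (s,k) * (P ^\<^sub>m t) $$ (k,j))"
    proof (intro sum.cong refl)
      fix j assume "j \<in> C"
      then have j: "j < S + 1" using C by auto
      have "(P ^\<^sub>m Suc t) $$ (s,j) = (P * P ^\<^sub>m t) $$ (s,j)" by (simp only: pow_Suc'[OF Pc])
      also have "\<dots> = (\<Sum>k=0..<S+1. P $$ (s,k) * (P ^\<^sub>m t) $$ (k,j))"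
        by (rule mm_entry[OF Pc pow_carrier_mat[OF Pc] sS j])
      finally show "(P ^\<^sub>m Suc t) $$ (s,j) = (\<Sum>k=0..<S+1. P $$ (s,k) * (P ^\<^sub>m t) $$ (k,j))" .
    qed
    also have "\<dots> = (\<Sum>k=0..<S+1. P $$ (s,k) * (\<Sum>j\<in>C. (P ^\<^sub>m t) $$ (k,j)))"
      by (simp add: sum_distrib_left sum.swap[of _ C])
    also have "\<dots> = (\<Sum>k=0..<S+1. if k \<in> C then P $$ (s,k) else 0)"
    proof (intro sum.cong refl)
      fix k assume k: "k \<in> {0..<S+1}"
      show "P $$ (s,k) * (\<Sum>j\<in>C. (P ^\<^sub>m t) $$ (k,j)) = (if k \<in> C then P $$ (s,k) else 0)"
      proof (cases "k \<in> C")
        case True then show ?thesis using Suc.IH by simp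
      next
        case False
        have "P $$ (s,k) = 0" using Pe[of s k] sS k cl sC[OF Suc.prems] Suc.prems False by auto
        then show ?thesis using False by simp
      qed
    qed
    also have "\<dots> = (\<Sum>k\<in>C. P $$ (s,k))"
      using C by (subst sum.inter_filter[symmetric]) (auto intro!: sum.cong)
    finally show ?case using row1[OF Suc.prems] by simp
  qed
  obtain s where s: "s \<in> C" using C by auto
  have "(\<lambda>t. (\<Sum>j\<in>C. (P ^\<^sub>m t) $$ (s,j))) \<longlonglongrightarrow> 0"
  proof (rule tendsto_null_sum)
    fix j assume "j \<in> C"
    then have "summable (\<lambda>t. (P ^\<^sub>m t) $$ (s,j))"
      using tr s C sA unfolding transient_def P_def by blast
    then show "(\<lambda>t. (P ^\<^sub>m t) $$ (s,j)) \<longlonglongrightarrow> 0" by (rule summable_LIMSEQ_zero)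
  qed
  then have "(\<lambda>t. 1::real) \<longlonglongrightarrow> 0" using pow1[OF s] by simp
  then show False using LIMSEQ_unique[OF tendsto_const] by fastforce
qed

theorem lemma2:
  fixes S :: nat and A :: "'a set" and p r :: "nat \<Rightarrow> 'a \<Rightarrow> nat \<Rightarrow> real"
    and \<beta> :: real and d :: "nat \<Rightarrow> 'a \<Rightarrow> real" and z :: "real vec"
  assumes "0 < S"
    and "0 < \<beta>"
    and "mdp S A p r"
    and "transient S A p"
    and "decision_rule S A d"
    and "z \<in> carrier_vec S" and "\<forall>i<S. 0 \<le> z $ i"
    and "\<forall>i<S. \<bar>winf S A p r \<beta> d z i\<bar> \<noteq> \<infinity>"
  shows "spectral_radius (map_mat complex_of_real (Bmat S A p r \<beta> d)) < 1"
proof (rule ccontr)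
  assume nlt: "\<not> ?thesis"
  define B where "B = Bmat S A p r \<beta> d"
  define bv where "bv = bvec S A p r \<beta> d"
  have finA: "finite A" using assms(3) by (auto simp: mdp_def)
  have pnn: "0 \<le> p s a j" if "s \<le> S" "a \<in> A" "j \<le> S" for s a j
    using assms(3) that by (auto simp: mdp_def)
  have dnn: "0 \<le> d s a" if "s < S" "a \<in> A" for s a
    using assms(5) that by (auto simp: decision_rule_def)
  have Bc: "B \<in> carrier_mat S S" by (simp add: B_def Bmat_def)
  have bc: "bv \<in> carrier_vec S" by (simp add: bv_def bvec_def)
  have Be: "B $$ (i,j) = (\<Sum>a\<in>A. p i a j * d i a * exp (- \<beta> * r i a j))" if "i < S" "j < S" for i j
    using that by (simp add: B_def Bmat_def)
  have be: "bv $ i = (\<Sum>a\<in>A. p i a S * d i a * exp (- \<beta> * r i a S))" if "i < S" for i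
    using that by (simp add: bv_def bvec_def)
  have Bnn: "0 \<le> B $$ (i,j)" if "i < S" "j < S" for i j
    unfolding Be[OF that] using that pnn dnn by (intro sum_nonneg) auto
  have bnn: "0 \<le> bv $ i" if "i < S" for i
    unfolding be[OF that] using that pnn dnn by (intro sum_nonneg) auto
  have pSuc: "(B ^\<^sub>m Suc k *\<^sub>v v) $ i = (\<Sum>j=0..<S. B $$ (i,j) * (B ^\<^sub>m k *\<^sub>v v) $ j)"
    if "v \<in> carrier_vec S" "i < S" for v k i
  proof -
    have "B ^\<^sub>m Suc k *\<^sub>v v = (B * B ^\<^sub>m k) *\<^sub>v v" by (simp only: pow_Suc'[OF Bc])
    also have "\<dots> = B *\<^sub>v (B ^\<^sub>m k *\<^sub>v v)"
      using Bc that by (simp add: assoc_mult_mat_vec[of _ S S _ S])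
    finally have "(B ^\<^sub>m Suc k *\<^sub>v v) $ i = (B *\<^sub>v (B ^\<^sub>m k *\<^sub>v v)) $ i" by simp
    also have "\<dots> = (\<Sum>j=0..<S. B $$ (i,j) * (B ^\<^sub>m k *\<^sub>v v) $ j)"
      by (rule mv_entry[OF Bc mult_mat_vec_carrier[OF pow_carrier_mat[OF Bc] that(1)] that(2)])
    finally show ?thesis .
  qed
  have p0: "(B ^\<^sub>m 0 *\<^sub>v v) $ i = v $ i" if "v \<in> carrier_vec S" "i < S" for v i
    using that Bc by simp
  have pnn': "0 \<le> (B ^\<^sub>m k *\<^sub>v v) $ i" if "v \<in> carrier_vec S" "\<forall>i<S. 0 \<le> v $ i" "i < S" for v k i
    using that(3)
  proof (induction k arbitrary: i)
    case 0 then show ?case using p0 that by simp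
  next
    case (Suc k) then show ?case using pSuc[OF that(1) Suc.prems] Bnn
      by (auto intro!: sum_nonneg)
  qed
  define f where "f k i = (B ^\<^sub>m k *\<^sub>v bv) $ i" for k i
  have fnn: "0 \<le> f k i" if "i < S" for k i
    unfolding f_def using pnn'[OF bc _ that] bnn by auto
  have fSuc: "f (Suc k) i = (\<Sum>j=0..<S. B $$ (i,j) * f k j)" if "i < S" for k i
    unfolding f_def using pSuc[OF bc that] .
  have f0: "f 0 i = bv $ i" if "i < S" for i unfolding f_def using p0[OF bc that] .
  have wte: "wt S A p r \<beta> d z t $ i = - (B ^\<^sub>m t *\<^sub>v z) $ i - (\<Sum>k<t. f k i)" if "i < S" for t i
    using that Bc by (simp add: wt_def f_def B_def bv_def)
  have summ: "summable (\<lambda>k. f k i)" if i: "i < S" for i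
  proof (rule ccontr)
    assume ns: "\<not> summable (\<lambda>k. f k i)"
    have big: "\<exists>t. M < (\<Sum>k<t. f k i)" for M
    proof (rule ccontr)
      assume "\<not> ?thesis"
      then have "(\<Sum>k<t. f k i) \<le> M" for t by (simp add: not_less)
      then have "summable (\<lambda>k. f k i)" using fnn[OF i] by (intro summableI_nonneg_bounded) auto
      with ns show False by simp
    qed
    have "((\<lambda>t. ereal (wt S A p r \<beta> d z t $ i)) \<longlongrightarrow> -\<infinity>) sequentially"
      unfolding tendsto_MInfty
    proof
      fix R :: real
      obtain t0 where t0: "- R < (\<Sum>k<t0. f k i)" using big by blast
      show "eventually (\<lambda>t. ereal (wt S A p r \<beta> d z t $ i) < ereal R) sequentially"
      proof (rule eventually_sequentiallyI[of t0])
        fix t assume "t0 \<le> t"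
        then have "(\<Sum>k<t0. f k i) \<le> (\<Sum>k<t. f k i)"
          using fnn[OF i] by (intro sum_mono2) auto
        moreover have "0 \<le> (B ^\<^sub>m t *\<^sub>v z) $ i" using pnn'[OF assms(6) assms(7) i] .
        ultimately show "ereal (wt S A p r \<beta> d z t $ i) < ereal R" using t0 wte[OF i] by simp
      qed
    qed
    then have "winf S A p r \<beta> d z i = -\<infinity>"
      unfolding winf_def by (rule lim_imp_Liminf[OF trivial_limit_sequentially])
    with assms(8) i show False by (metis abs_ereal_uminus abs_ereal.simps(2))
  qed
  define g where "g i = (\<Sum>k. f k i)" for i
  have gnn: "0 \<le> g i" if "i < S" for i
    unfolding g_def using summ[OF that] fnn[OF that] by (simp add: suminf_nonneg)
  have geq: "g i = bv $ i + (\<Sum>j=0..<S. B $$ (i,j) * g j)" if i: "i < S" for i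
  proof -
    have "(\<Sum>k. f (Suc k) i) = g i - f 0 i"
      unfolding g_def by (rule suminf_split_head[OF summ[OF i]])
    moreover have "(\<Sum>k. f (Suc k) i) = (\<Sum>k. \<Sum>j=0..<S. B $$ (i,j) * f k j)"
      using fSuc[OF i] by simp
    moreover have "\<dots> = (\<Sum>j=0..<S. \<Sum>k. B $$ (i,j) * f k j)"
      using summ by (intro suminf_sum) (auto intro!: summable_mult)
    moreover have "\<dots> = (\<Sum>j=0..<S. B $$ (i,j) * g j)"
      unfolding g_def using summ by (intro sum.cong refl suminf_mult) auto
    ultimately show ?thesis using f0[OF i] by simp
  qed
  have "\<exists>C. C \<subseteq> {..<S} \<and> C \<noteq> {} \<and> (\<forall>s\<in>C. bv $ s = 0 \<and> (\<forall>j<S. j \<notin> C \<longrightarrow> B $$ (s,j) = 0))"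
  proof (cases "\<exists>j<S. g j = 0")
    case True
    define C where "C = {j. j < S \<and> g j = 0}"
    have "bv $ s = 0 \<and> (\<forall>j<S. j \<notin> C \<longrightarrow> B $$ (s,j) = 0)" if s: "s \<in> C" for s
    proof -
      have sS: "s < S" using s by (auto simp: C_def)
      have z0: "bv $ s + (\<Sum>j=0..<S. B $$ (s,j) * g j) = 0" using geq[OF sS] s by (simp add: C_def)
      have nnj: "0 \<le> B $$ (s,j) * g j" if "j \<in> {0..<S}" for j
        using Bnn[OF sS] gnn that by simp
      have nn: "0 \<le> (\<Sum>j=0..<S. B $$ (s,j) * g j)" using nnj by (rule sum_nonneg)
      have b0: "bv $ s = 0" using z0 nn bnn[OF sS] by linarith
      have "(\<Sum>j=0..<S. B $$ (s,j) * g j) = 0" using z0 b0 by simp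
      then have all0: "\<forall>j\<in>{0..<S}. B $$ (s,j) * g j = 0"
        using sum_nonneg_eq_0_iff[of "{0..<S}" "\<lambda>j. B $$ (s,j) * g j"] nnj by simp
      have "B $$ (s,j) = 0" if "j < S" "j \<notin> C" for j
      proof -
        have "g j \<noteq> 0" using that by (simp add: C_def)
        moreover have "B $$ (s,j) * g j = 0" using all0 that(1) by simp
        ultimately show ?thesis by simp
      qed
      with b0 show ?thesis by blast
    qed
    moreover have "C \<noteq> {}" using True by (auto simp: C_def)
    moreover have "C \<subseteq> {..<S}" by (auto simp: C_def)
    ultimately show ?thesis by blast
  next
    case False
    then have gpos: "0 < g j" if "j < S" for j using gnn[OF that] that by force
    define Bc' where "Bc' = map_mat complex_of_real B"
    have Bc'c: "Bc' \<in> carrier_mat S S" using Bc by (simp add: Bc'_def)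
    have sr: "1 \<le> spectral_radius Bc'" using nlt by (simp add: Bc'_def B_def)
    obtain lam where lam: "lam \<in> spectrum Bc'" "norm lam = spectral_radius Bc'"
      using spectral_radius_mem_max(1)[OF Bc'c assms(1)] by auto
    then obtain v where v: "v \<in> carrier_vec S" "v \<noteq> 0\<^sub>v S" "Bc' *\<^sub>v v = lam \<cdot>\<^sub>v v"
      using Bc'c by (auto simp: spectrum_def eigenvalue_def eigenvector_def)
    define y where "y j = cmod (v $ j)" for j
    obtain j0 where j0: "j0 < S" "v $ j0 \<noteq> 0"
      using v by (metis eq_vecI index_zero_vec(1,2) carrier_vecD)
    have ysub: "y i \<le> (\<Sum>j=0..<S. B $$ (i,j) * y j)" if i: "i < S" for i
    proof -
      have "lam * v $ i = (Bc' *\<^sub>v v) $ i" using v i by simp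
      also have "\<dots> = (\<Sum>j=0..<S. complex_of_real (B $$ (i,j)) * v $ j)"
        using mv_entry[OF Bc'c v(1) i] i Bc by (simp add: Bc'_def)
      finally have eq: "lam * v $ i = (\<Sum>j=0..<S. complex_of_real (B $$ (i,j)) * v $ j)" .
      have "y i \<le> cmod lam * y i" using sr lam(2) by (simp add: y_def mult_le_cancel_right1)
      also have "\<dots> = cmod (lam * v $ i)" by (simp add: y_def norm_mult)
      also have "\<dots> \<le> (\<Sum>j=0..<S. cmod (complex_of_real (B $$ (i,j)) * v $ j))"
        unfolding eq by (rule norm_sum)
      also have "\<dots> = (\<Sum>j=0..<S. B $$ (i,j) * y j)"
        using Bnn i by (intro sum.cong refl) (auto simp: norm_mult y_def)
      finally show ?thesis .
    qed
    define c where "c = Max ((\<lambda>j. y j / g j) ` {0..<S})"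
    have cge: "y j / g j \<le> c" if "j < S" for j unfolding c_def using that by (intro Max_ge) auto
    have yle: "y j \<le> c * g j" if "j < S" for j using cge[OF that] gpos[OF that]
      by (simp add: divide_le_eq mult.commute)
    have "c \<in> (\<lambda>j. y j / g j) ` {0..<S}"
      unfolding c_def using assms(1) by (intro Max_in) auto
    then obtain s0 where s0: "s0 < S" "c = y s0 / g s0" by auto
    have "0 < y j0" using j0(2) by (simp add: y_def)
    then have "0 < y j0 / g j0" using gpos[OF j0(1)] by simp
    then have cpos: "0 < c" using cge[OF j0(1)] by linarith
    define M where "M = {j. j < S \<and> y j = c * g j}"
    have "s0 \<in> M" using s0 gpos[OF s0(1)] by (simp add: M_def)
    have "bv $ s = 0 \<and> (\<forall>j<S. j \<notin> M \<longrightarrow> B $$ (s,j) = 0)" if s: "s \<in> M" for s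
    proof -
      have sS: "s < S" using s by (auto simp: M_def)
      define SY where "SY = (\<Sum>j=0..<S. B $$ (s,j) * y j)"
      define SD where "SD = (\<Sum>j=0..<S. B $$ (s,j) * (c * g j - y j))"
      define SG where "SG = (\<Sum>j=0..<S. B $$ (s,j) * g j)"
      have h1: "c * g s \<le> SY" using ysub[OF sS] s by (simp add: M_def SY_def)
      have h2: "SY + SD = c * SG"
        unfolding SY_def SD_def SG_def
        by (simp add: sum.distrib[symmetric] sum_distrib_left algebra_simps)
      have h3: "SG = g s - bv $ s" using geq[OF sS] by (simp add: SG_def)
      have nn: "\<forall>j\<in>{0..<S}. 0 \<le> B $$ (s,j) * (c * g j - y j)"
        using Bnn sS yle by auto
      have h4: "0 \<le> SD" unfolding SD_def using nn by (intro sum_nonneg) auto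
      have h5: "0 \<le> c * bv $ s" using bnn[OF sS] cpos by simp
      have h6: "c * SG = c * g s - c * bv $ s" using h3 by (simp add: right_diff_distrib)
      have sz: "SD = 0" and cb: "c * bv $ s = 0" using h1 h2 h4 h5 h6 by linarith+
      have b0: "bv $ s = 0" using cb cpos by simp
      have nnj: "0 \<le> B $$ (s,j) * (c * g j - y j)" if "j \<in> {0..<S}" for j
        using nn that by blast
      have all0: "\<forall>j\<in>{0..<S}. B $$ (s,j) * (c * g j - y j) = 0"
        using sz sum_nonneg_eq_0_iff[of "{0..<S}" "\<lambda>j. B $$ (s,j) * (c * g j - y j)"] nnj
        unfolding SD_def by simp
      have "B $$ (s,j) = 0" if "j < S" "j \<notin> M" for j
      proof -
        have "c * g j - y j \<noteq> 0" using that by (simp add: M_def)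
        moreover have "B $$ (s,j) * (c * g j - y j) = 0" using all0 that(1) by simp
        ultimately show ?thesis by simp
      qed
      with b0 show ?thesis by blast
    qed
    moreover have "M \<subseteq> {..<S}" by (auto simp: M_def)
    moreover have "M \<noteq> {}" using \<open>s0 \<in> M\<close> by blast
    ultimately show ?thesis by blast
  qed
  then obtain C where C: "C \<subseteq> {..<S}" "C \<noteq> {}"
    and Ccl: "\<forall>s\<in>C. bv $ s = 0 \<and> (\<forall>j<S. j \<notin> C \<longrightarrow> B $$ (s,j) = 0)" by blast
  have "\<forall>s\<in>C. \<forall>a\<in>A. 0 < d s a \<longrightarrow> (\<forall>j\<le>S. j \<notin> C \<longrightarrow> p s a j = 0)"
  proof (intro ballI impI allI)
    fix s a j assume s: "s \<in> C" and a: "a \<in> A" and da: "0 < d s a" and j: "j \<le> S" "j \<notin> C"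
    have sS: "s < S" using s C by auto
    have "(\<Sum>a\<in>A. p s a j * d s a * exp (- \<beta> * r s a j)) = 0"
    proof (cases "j = S")
      case True then show ?thesis using Ccl s be[OF sS] by simp
    next
      case False then have "j < S" using j by simp
      then have "B $$ (s,j) = 0" using Ccl s j by blast
      then show ?thesis using Be[OF sS \<open>j < S\<close>] by simp
    qed
    moreover have "\<forall>a\<in>A. 0 \<le> p s a j * d s a * exp (- \<beta> * r s a j)"
      using pnn dnn sS j by auto
    ultimately have "p s a j * d s a * exp (- \<beta> * r s a j) = 0"
      using sum_nonneg_eq_0_iff[OF finA, of "\<lambda>a. p s a j * d s a * exp (- \<beta> * r s a j)"] a by simp
    then show "p s a j = 0" using da by simp
  qed
  then show False using closed_contra[OF assms(3,4,5) C] by blast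
qed
end
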